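(* Let $F\subset\mathrm{Sym}^2(\mathbb{R}^n)$ be a cone subequation invariant under a subgroup of $\mathrm{O}(n)$ acting transitively on $S^{n-1}$, with Riesz characteristic $p_F=p$, where $1\le p<\infty$ and $p\neq2$. Suppose $g:S^{n-1}\to[-\infty,\infty)$ is such that $u(x)\equiv\frac{1}{|x|^{p-2}}g\big(\frac{x}{|x|}\big)$ is $F$-subharmonic on $\mathbb{R}^n$ across $0$, and let $\Theta\equiv\Theta^M(u,0)$. Then: (1) $g$ is $F_{S^{n-1}}$-subharmonic on $S^{n-1}$; (2) if $2<p<\infty$, then $\sup_{S^{n-1}}g=-\Theta\le0$; (3) if $1\le p<2$, then $\sup_{S^{n-1}}g=\Theta\ge0$.
   Context: A cone subequation is a closed $F\subset\mathrm{Sym}^2(\mathbb{R}^n)$, $\emptyset\ne F\ne\mathrm{Sym}^2(\mathbb{R}^n)$, with $F+\{A\ge0\}\subset F$ and $tF\subset F$ for $t\ge0$. Its Riesz characteristic is $p_F=\sup\{t: P_{e^\perp}-(t-1)P_e\in F\}$ for a (any) unit vector $e$, where $P_e,P_{e^\perp}$ are orthogonal projections onto $\mathbb{R}e$ and $e^\perp$. $F$-subharmonic: upper semicontinuous $u$ such that for every $x$ and every $C^2$ $\varphi$ with $u\le\varphi$ near $x$, $u(x)=\varphi(x)$, one has $D^2\varphi(x)\in F$. Riesz kernel: $K_p(t)=t^{2-p}$ for $1\le p<2$, $K_p(t)=-t^{2-p}$ for $p>2$. With $M(u,r)=\sup_{|x|\le r}u$, $\Theta^M(u,0)=\lim_{r<s\downarrow0}\frac{M(u,r)-M(u,s)}{K_p(r)-K_p(s)}$.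 $F_{S^{n-1}}=\Phi^{-1}(F)$, where $\Phi$ maps a Riemannian $2$-jet $(r,q,H)$ at $\sigma\in S^{n-1}$ to $H-(p-2)rP_{\sigma^\perp}-(p-1)(\sigma q^t+q\sigma^t)+(p-2)(p-1)rP_\sigma$ ($q\in T_\sigma S^{n-1}\subset\mathbb{R}^n$, $H$ extended by zero on $\mathbb{R}\sigma$); $g$ is $F_{S^{n-1}}$-subharmonic if it is upper semicontinuous and for every $\sigma$ and $C^2$ $\psi$ with $g\le\psi$ near $\sigma$, $g(\sigma)=\psi(\sigma)$, the jet $(\psi(\sigma),D_\sigma\psi,\mathrm{Hess}_\sigma\psi)\in F_{S^{n-1}}$. *)

theory Defs
  imports "HOL-Analysis.Analysis" "HOL-Library.Extended_Real"
begin

definition sym_mat :: "real^'n^'n \<Rightarrow> bool" where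
  "sym_mat A \<longleftrightarrow> transpose A = A"

definition psd_mat :: "real^'n^'n \<Rightarrow> bool" where
  "psd_mat A \<longleftrightarrow> sym_mat A \<and> (\<forall>v. 0 \<le> v \<bullet> (A *v v))"

definition outer :: "real^'n \<Rightarrow> real^'n \<Rightarrow> real^'n^'n" where
  "outer a b = (\<chi> i j. a $ i * b $ j)"

text \<open>Orthogonal projections onto R e and onto e-perp (e a unit vector).\<close>
definition proj_line :: "real^'n \<Rightarrow> real^'n^'n" where
  "proj_line e = outer e e"

definition proj_perp :: "real^'n \<Rightarrow> real^'n^'n" where
  "proj_perp e = mat 1 - proj_line e"

definition cone_subequation :: "(real^'n^'n) set \<Rightarrow> bool" where
  "cone_subequation F \<longleftrightarrow>
     F \<subseteq> {A. sym_mat A} \<and> closed F \<and> F \<noteq> {} \<and> F \<noteq> {A. sym_mat A} \<and>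
     (\<forall>A\<in>F. \<forall>P. psd_mat P \<longrightarrow> A + P \<in> F) \<and>
     (\<forall>A\<in>F. \<forall>t::real. 0 \<le> t \<longrightarrow> t *\<^sub>R A \<in> F)"

definition transitive_orth_subgroup :: "(real^'n^'n) set \<Rightarrow> bool" where
  "transitive_orth_subgroup G \<longleftrightarrow>
     (\<forall>g\<in>G. orthogonal_matrix g) \<and> mat 1 \<in> G \<and>
     (\<forall>g\<in>G. \<forall>h\<in>G. g ** h \<in> G) \<and> (\<forall>g\<in>G. transpose g \<in> G) \<and>
     (\<forall>\<sigma> \<tau>. norm \<sigma> = 1 \<longrightarrow> norm \<tau> = 1 \<longrightarrow> (\<exists>g\<in>G. g *v \<sigma> = \<tau>))"

definition invariant_under :: "(real^'n^'n) set \<Rightarrow> (real^'n^'n) set \<Rightarrow> bool" where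
  "invariant_under G F \<longleftrightarrow> (\<forall>g\<in>G. \<forall>A\<in>F. g ** A ** transpose g \<in> F)"

definition riesz_char :: "(real^'n^'n) set \<Rightarrow> real^'n \<Rightarrow> ereal" where
  "riesz_char F e = Sup (ereal ` {t. proj_perp e - (t - 1) *\<^sub>R proj_line e \<in> F})"

definition usc_on :: "'a::topological_space set \<Rightarrow> ('a \<Rightarrow> ereal) \<Rightarrow> bool" where
  "usc_on S f \<longleftrightarrow> (\<forall>x\<in>S. \<forall>c. f x < c \<longrightarrow> eventually (\<lambda>y. f y < c) (at x within S))"

definition C2_with :: "(real^'n) set \<Rightarrow> (real^'n \<Rightarrow> real) \<Rightarrow> (real^'n \<Rightarrow> real^'n)
    \<Rightarrow> (real^'n \<Rightarrow> real^'n^'n) \<Rightarrow> bool" where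
  "C2_with U \<phi> D1 D2 \<longleftrightarrow>
     (\<forall>x\<in>U. (\<phi> has_derivative (\<lambda>h. D1 x \<bullet> h)) (at x)) \<and>
     (\<forall>x\<in>U. (D1 has_derivative (\<lambda>h. D2 x *v h)) (at x)) \<and>
     continuous_on U D2"

definition F_subharmonic :: "(real^'n^'n) set \<Rightarrow> (real^'n \<Rightarrow> ereal) \<Rightarrow> bool" where
  "F_subharmonic F u \<longleftrightarrow>
     (\<forall>x. u x < \<infinity>) \<and> usc_on UNIV u \<and>
     (\<forall>x U \<phi> D1 D2. open U \<and> x \<in> U \<and> C2_with U \<phi> D1 D2 \<and>
        (\<forall>y\<in>U. u y \<le> ereal (\<phi> y)) \<and> u x = ereal (\<phi> x) \<longrightarrow> D2 x \<in> F)"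

text \<open>The map Phi from Riemannian 2-jets (r,q,H) at sigma on the sphere to Sym^2(R^n).\<close>
definition Phi_jet :: "real \<Rightarrow> real^'n \<Rightarrow> real \<Rightarrow> real^'n \<Rightarrow> real^'n^'n \<Rightarrow> real^'n^'n" where
  "Phi_jet p \<sigma> r q H =
     H - ((p - 2) * r) *\<^sub>R proj_perp \<sigma> - (p - 1) *\<^sub>R (outer \<sigma> q + outer q \<sigma>)
       + ((p - 2) * (p - 1) * r) *\<^sub>R proj_line \<sigma>"

text \<open>A C^2 function near sigma on
  the sphere is represented as the restriction of a C^2 function Psi on an open set U of R^n;
  its Riemannian gradient is the tangential projection of the ambient gradient and its
  Riemannian Hessian (on the tangent space, extended by zero on R sigma) is
  P Hess(Psi) P - (grad Psi . sigma) P, with P the projection onto sigma-perp.\<close>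
definition F_sphere_subharmonic ::
    "(real^'n^'n) set \<Rightarrow> real \<Rightarrow> (real^'n \<Rightarrow> ereal) \<Rightarrow> bool" where
  "F_sphere_subharmonic F p g \<longleftrightarrow>
     (\<forall>\<sigma>\<in>sphere 0 1. g \<sigma> < \<infinity>) \<and> usc_on (sphere 0 1) g \<and>
     (\<forall>\<sigma>\<in>sphere 0 1. \<forall>U \<Psi> D1 D2. open U \<and> \<sigma> \<in> U \<and> C2_with U \<Psi> D1 D2 \<and>
        (\<forall>y\<in>U \<inter> sphere 0 1. g y \<le> ereal (\<Psi> y)) \<and> g \<sigma> = ereal (\<Psi> \<sigma>) \<longrightarrow>
        Phi_jet p \<sigma> (\<Psi> \<sigma>) (proj_perp \<sigma> *v D1 \<sigma>)
          (proj_perp \<sigma> ** D2 \<sigma> ** proj_perp \<sigma> - (D1 \<sigma> \<bullet> \<sigma>) *\<^sub>R proj_perp \<sigma>) \<in> F)"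

definition riesz_kernel :: "real \<Rightarrow> real \<Rightarrow> real" where
  "riesz_kernel p t = (if p < 2 then t powr (2 - p) else - (t powr (2 - p)))"

definition max_fun :: "(real^'n \<Rightarrow> ereal) \<Rightarrow> real \<Rightarrow> ereal" where
  "max_fun u r = Sup (u ` cball 0 r)"

definition small_pairs :: "(real \<times> real) filter" where
  "small_pairs = at (0, 0) within {(r, s). 0 < r \<and> r < s}"

definition theta_quot :: "real \<Rightarrow> (real^'n \<Rightarrow> ereal) \<Rightarrow> real \<times> real \<Rightarrow> ereal" where
  "theta_quot p u = (\<lambda>(r, s). (max_fun u r - max_fun u s) / ereal (riesz_kernel p r - riesz_kernel p s))"

end

theory Submission
  imports Defs
begin

lemma outer_mulv: "outer a b *v h = (b \<bullet> h) *\<^sub>R (a::real^'n)"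
  by (simp add: vec_eq_iff outer_def matrix_vector_mult_def inner_vec_def sum_distrib_left mult.commute mult.left_commute)

lemma scaleR_mulv: "(c *\<^sub>R (A::real^'n^'m)) *v v = c *\<^sub>R (A *v v)"
  by (simp add: scaleR_matrix_vector_assoc)

lemma neg_mulv: "(- (A::real^'n^'m)) *v v = - (A *v v)"
  by (simp add: vec_eq_iff matrix_vector_mult_def sum_negf)

lemma transpose_outer: "transpose (outer a b) = outer b (a::real^'n)"
  by (simp add: vec_eq_iff outer_def transpose_def mult.commute)

lemma mulv_bound: "norm ((A::real^'n^'n) *v v) \<le> onorm ((*v) A) * norm v"
  by (simp add: onorm matrix_vector_mul_bounded_linear)

lemma inner_mulv_transpose: "((A::real^'n^'n) *v h) \<bullet> a = h \<bullet> (transpose A *v a)"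
  by (metis dot_lmul_matrix inner_commute vector_transpose_matrix)

lemma neg_id_in_F_False:
  fixes F :: "(real^'n^'n) set"
  assumes F: "cone_subequation F" and K: "K > 0" and inF: "(- K) *\<^sub>R mat 1 \<in> F"
  shows False
proof -
  have "A \<in> F" if sA: "sym_mat A" for A :: "real^'n^'n"
  proof -
    define c where "c = onorm ((*v) A) + 1"
    have c0: "c > 0" unfolding c_def using onorm_pos_le[OF matrix_vector_mul_bounded_linear, of A] by simp
    have psd: "psd_mat (A + c *\<^sub>R mat 1)"
      unfolding psd_mat_def
    proof
      show "sym_mat (A + c *\<^sub>R mat 1)" using sA
        by (simp add: sym_mat_def transpose_def vec_eq_iff mat_def)
      show "\<forall>v. 0 \<le> v \<bullet> ((A + c *\<^sub>R mat 1) *v v)"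
      proof
        fix v :: "real^'n"
        have "\<bar>v \<bullet> (A *v v)\<bar> \<le> norm v * norm (A *v v)" by (rule Cauchy_Schwarz_ineq2)
        also have "\<dots> \<le> norm v * (onorm ((*v) A) * norm v)"
          by (simp add: mulv_bound mult_left_mono)
        finally have "\<bar>v \<bullet> (A *v v)\<bar> \<le> onorm ((*v) A) * (v \<bullet> v)"
          by (simp add: power2_norm_eq_inner[symmetric] power2_eq_square algebra_simps)
        moreover have "(A + c *\<^sub>R mat 1) *v v = A *v v + c *\<^sub>R v"
          by (simp add: matrix_vector_mult_add_rdistrib scaleR_mulv)
        ultimately show "0 \<le> v \<bullet> ((A + c *\<^sub>R mat 1) *v v)"
          by (simp add: inner_add_right c_def algebra_simps)
      qed
    qed
    have ck: "0 \<le> c / K" using c0 K by simp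
    have "(c / K) *\<^sub>R ((- K) *\<^sub>R mat 1) \<in> F" using F inF ck unfolding cone_subequation_def by blast
    then have "(c / K) *\<^sub>R ((- K) *\<^sub>R mat 1) + (A + c *\<^sub>R mat 1) \<in> F"
      using F psd unfolding cone_subequation_def by blast
    moreover have "(c / K) *\<^sub>R ((- K) *\<^sub>R mat 1) + (A + c *\<^sub>R mat 1) = A" using K by simp
    ultimately show ?thesis by metis
  qed
  then have "F = {A. sym_mat A}" using F unfolding cone_subequation_def by auto
  then show False using F unfolding cone_subequation_def by auto
qed

lemma C2_quad: "C2_with U (\<lambda>y::real^'n. a - y \<bullet> y) (\<lambda>y. (-2) *\<^sub>R y) (\<lambda>y. (-2) *\<^sub>R mat 1)"
  unfolding C2_with_def
proof (intro conjI ballI)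
  fix x :: "real^'n" assume "x \<in> U"
  show "((\<lambda>y::real^'n. a - y \<bullet> y) has_derivative (\<lambda>h. (-2) *\<^sub>R x \<bullet> h)) (at x)"
    by (rule derivative_eq_intros refl | simp add: inner_commute)+
  show "((\<lambda>y. (-2) *\<^sub>R y) has_derivative (\<lambda>h. ((-2) *\<^sub>R mat 1) *v h)) (at x)"
    by (rule derivative_eq_intros refl | simp add: scaleR_mulv neg_mulv fun_eq_iff)+
qed (simp add: continuous_on_const)

lemma bad_test:
  fixes F :: "(real^'n^'n) set"
  assumes F: "cone_subequation F" and u: "F_subharmonic F u" and u0: "u 0 = ereal a"
    and d: "\<delta> > 0" and le: "\<forall>y\<in>ball 0 \<delta>. u y \<le> ereal (a - y \<bullet> y)"
  shows False
proof -
  have "(\<lambda>y::real^'n. (-2) *\<^sub>R (mat 1::real^'n^'n)) 0 \<in> F"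
    using u unfolding F_subharmonic_def
    apply (elim conjE)
    apply (erule allE[of _ 0], erule allE[of _ "ball 0 \<delta>"], erule allE[of _ "\<lambda>y. a - y \<bullet> y"],
        erule allE[of _ "\<lambda>y. (-2) *\<^sub>R y"], erule allE[of _ "\<lambda>y. (-2) *\<^sub>R mat 1"])
    using C2_quad d le u0 by auto
  then show False using neg_id_in_F_False[OF F, of 2] by simp
qed

lemma norm_powr_m2: "(x::real^'n) \<noteq> 0 \<Longrightarrow> norm x powr (k - 2) = norm x powr k / (norm x)^2"
  by (simp add: powr_diff)

lemma norm_powr_deriv:
  fixes x :: "real^'n"
  assumes x: "x \<noteq> 0"
  shows "((\<lambda>x. norm x powr k) has_derivative (\<lambda>h. ((k * norm x powr (k-2)) *\<^sub>R x) \<bullet> h)) (at x)"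
proof -
  have "((\<lambda>x. norm x powr k) has_derivative (\<lambda>h. norm x powr k * (0 * ln (norm x) + (h \<bullet> sgn x) * k / norm x))) (at x)"
    by (rule has_derivative_powr[OF has_derivative_norm[OF x, unfolded gderiv_def] has_derivative_const]) (use x in simp_all)
  then show ?thesis
    apply (rule has_derivative_eq_rhs)
    using x by (auto simp: fun_eq_iff norm_powr_m2 sgn_div_norm inner_commute power2_eq_square field_simps)
qed

lemma continuous_on_outer[continuous_intros]:
  "continuous_on S a \<Longrightarrow> continuous_on S b \<Longrightarrow> continuous_on S (\<lambda>x. outer (a x) (b x :: real^'n))"
  unfolding outer_def by (intro continuous_intros)

lemma continuous_on_matmul[continuous_intros]:
  fixes A :: "'a::topological_space \<Rightarrow> real^'n^'m" and B :: "'a \<Rightarrow> real^'k^'n"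
  shows "continuous_on S A \<Longrightarrow> continuous_on S B \<Longrightarrow> continuous_on S (\<lambda>x. A x ** B x)"
  unfolding matrix_matrix_mult_def by (intro continuous_intros)

lemma continuous_on_mulv[continuous_intros]:
  fixes A :: "'a::topological_space \<Rightarrow> real^'n^'m" and v :: "'a \<Rightarrow> real^'n"
  shows "continuous_on S A \<Longrightarrow> continuous_on S v \<Longrightarrow> continuous_on S (\<lambda>x. A x *v v x)"
  unfolding matrix_vector_mult_def by (intro continuous_intros)

lemma C2_radial:
  "C2_with (-{0}) (\<lambda>x::real^'n. norm x powr k) (\<lambda>x. (k * norm x powr (k-2)) *\<^sub>R x)
     (\<lambda>x. (k * norm x powr (k-2)) *\<^sub>R mat 1 + (k * (k-2) * norm x powr (k-2-2)) *\<^sub>R outer x x)"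
  unfolding C2_with_def
proof (intro conjI ballI)
  fix x :: "real^'n" assume "x \<in> - {0}"
  then have x: "x \<noteq> 0" by simp
  show "((\<lambda>x. norm x powr k) has_derivative (\<lambda>h. ((k * norm x powr (k-2)) *\<^sub>R x) \<bullet> h)) (at x)"
    by (rule norm_powr_deriv[OF x])
  have d: "((\<lambda>x. norm x powr (k-2)) has_derivative (\<lambda>h. (((k-2) * norm x powr (k-2-2)) *\<^sub>R x) \<bullet> h)) (at x)"
    by (rule norm_powr_deriv[OF x])
  show "((\<lambda>x. (k * norm x powr (k-2)) *\<^sub>R x) has_derivative
      (\<lambda>h. ((k * norm x powr (k-2)) *\<^sub>R mat 1 + (k * (k-2) * norm x powr (k-2-2)) *\<^sub>R outer x x) *v h)) (at x)"
    apply (rule has_derivative_eq_rhs[OF has_derivative_scaleR[OF has_derivative_mult_right[OF d] has_derivative_ident]])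
    by (simp add: fun_eq_iff matrix_vector_mult_add_rdistrib scaleR_mulv outer_mulv algebra_simps)
next
  show "continuous_on (- {0}) (\<lambda>x::real^'n. (k * norm x powr (k-2)) *\<^sub>R mat 1 + (k * (k-2) * norm x powr (k-2-2)) *\<^sub>R outer x x)"
    by (intro continuous_intros) auto
qed

lemma C2_cont:
  assumes "C2_with V a Da D2a"
  shows "continuous_on V a" "continuous_on V Da"
proof -
  have "\<forall>x\<in>V. (a has_derivative (\<lambda>h. Da x \<bullet> h)) (at x)" "\<forall>x\<in>V. (Da has_derivative (\<lambda>h. D2a x *v h)) (at x)"
    using assms unfolding C2_with_def by auto
  then show "continuous_on V a" "continuous_on V Da"
    by (auto intro!: has_derivative_continuous_on intro: has_derivative_at_withinI)
qed

lemma C2_prod: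
  assumes A: "C2_with V a Da D2a" and B: "C2_with V b Db D2b"
  shows "C2_with V (\<lambda>x. a x * b x) (\<lambda>x. a x *\<^sub>R Db x + b x *\<^sub>R Da x)
     (\<lambda>x. a x *\<^sub>R D2b x + b x *\<^sub>R D2a x + outer (Db x) (Da x) + outer (Da x) (Db x))"
  unfolding C2_with_def
proof (intro conjI ballI)
  fix x assume x: "x \<in> V"
  have a1: "(a has_derivative (\<lambda>h. Da x \<bullet> h)) (at x)" and a2: "(Da has_derivative (\<lambda>h. D2a x *v h)) (at x)"
    and b1: "(b has_derivative (\<lambda>h. Db x \<bullet> h)) (at x)" and b2: "(Db has_derivative (\<lambda>h. D2b x *v h)) (at x)"
    using A B x unfolding C2_with_def by auto
  show "((\<lambda>x. a x * b x) has_derivative (\<lambda>h. (a x *\<^sub>R Db x + b x *\<^sub>R Da x) \<bullet> h)) (at x)"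
    by (rule has_derivative_eq_rhs[OF has_derivative_mult[OF a1 b1]]) (simp add: fun_eq_iff inner_add_right inner_commute mult.commute)
  show "((\<lambda>x. a x *\<^sub>R Db x + b x *\<^sub>R Da x) has_derivative
     (\<lambda>h. (a x *\<^sub>R D2b x + b x *\<^sub>R D2a x + outer (Db x) (Da x) + outer (Da x) (Db x)) *v h)) (at x)"
    apply (rule has_derivative_eq_rhs[OF has_derivative_add[OF has_derivative_scaleR[OF a1 b2] has_derivative_scaleR[OF b1 a2]]])
      by (simp add: fun_eq_iff matrix_vector_mult_add_rdistrib scaleR_mulv outer_mulv add_ac)
next
  show "continuous_on V (\<lambda>x. a x *\<^sub>R D2b x + b x *\<^sub>R D2a x + outer (Db x) (Da x) + outer (Da x) (Db x))"
  proof -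
    have "continuous_on V D2a" "continuous_on V D2b" using A B unfolding C2_with_def by auto
    then show ?thesis using C2_cont[OF A] C2_cont[OF B]
      by (intro continuous_on_add continuous_on_scaleR continuous_on_outer) auto
  qed
qed

lemma key_identity:
  fixes y h a :: "real^'n" and B :: "real^'n^'n"
  shows "c *\<^sub>R (B *v (c *\<^sub>R (h - (y \<bullet> h) *\<^sub>R y)) - ((a \<bullet> y) *\<^sub>R (c *\<^sub>R (h - (y \<bullet> h) *\<^sub>R y)) + (a \<bullet> (c *\<^sub>R (h - (y \<bullet> h) *\<^sub>R y)) + (B *v (c *\<^sub>R (h - (y \<bullet> h) *\<^sub>R y))) \<bullet> y) *\<^sub>R y))
       + (- (c * (h \<bullet> y) * c)) *\<^sub>R (a - (a \<bullet> y) *\<^sub>R y)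
   = (c*c) *\<^sub>R ((proj_perp y ** B ** proj_perp y - (a \<bullet> y) *\<^sub>R proj_perp y - outer y (proj_perp y *v a) - outer (proj_perp y *v a) y) *v h)"
  by (simp add: proj_perp_def proj_line_def matrix_vector_mult_diff_rdistrib scaleR_mulv outer_mulv
      matrix_vector_mul_assoc[symmetric] matrix_vector_mult_diff_distrib matrix_vector_mult_scaleR
      inner_diff_left inner_diff_right scaleR_diff_right scaleR_scaleR algebra_simps inner_commute)

definition pr :: "real^'n \<Rightarrow> real^'n" where "pr x = inverse (norm x) *\<^sub>R x"

lemma sgn_pr: "sgn x = pr x"
  by (simp add: pr_def sgn_div_norm divide_inverse_commute)

lemma norm_deriv: "(x::real^'n) \<noteq> 0 \<Longrightarrow> (norm has_derivative (\<lambda>h. h \<bullet> pr x)) (at x)"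
  using has_derivative_norm[of x, unfolded gderiv_def] by (simp add: sgn_pr)

lemma inv_norm_deriv: "(x::real^'n) \<noteq> 0 \<Longrightarrow>
   ((\<lambda>x. inverse (norm x)) has_derivative (\<lambda>h. - (inverse (norm x) * (h \<bullet> pr x) * inverse (norm x)))) (at x)"
  by (rule Deriv.has_derivative_inverse[OF _ norm_deriv]) auto

lemma pr_deriv: "(x::real^'n) \<noteq> 0 \<Longrightarrow>
   (pr has_derivative (\<lambda>h. inverse (norm x) *\<^sub>R (h - (pr x \<bullet> h) *\<^sub>R pr x))) (at x)"
  unfolding pr_def[abs_def]
  apply (rule has_derivative_eq_rhs[OF has_derivative_scaleR[OF inv_norm_deriv has_derivative_ident]], assumption)
  by (simp add: fun_eq_iff pr_def algebra_simps inner_commute)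

lemma continuous_on_pr: "continuous_on (- {0}) (pr :: real^'n \<Rightarrow> _)"
  unfolding pr_def[abs_def] by (intro continuous_intros) auto

lemma C2_homog0:
  fixes \<Psi> :: "real^'n \<Rightarrow> real"
  assumes C: "C2_with U \<Psi> D1 D2" and U: "open U"
  shows "C2_with {x. x \<noteq> 0 \<and> pr x \<in> U} (\<lambda>x. \<Psi> (pr x))
     (\<lambda>x. inverse (norm x) *\<^sub>R (D1 (pr x) - (D1 (pr x) \<bullet> pr x) *\<^sub>R pr x))
     (\<lambda>x. (inverse (norm x) * inverse (norm x)) *\<^sub>R (proj_perp (pr x) ** D2 (pr x) ** proj_perp (pr x)
        - (D1 (pr x) \<bullet> pr x) *\<^sub>R proj_perp (pr x) - outer (pr x) (proj_perp (pr x) *v D1 (pr x))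
        - outer (proj_perp (pr x) *v D1 (pr x)) (pr x)))"
  unfolding C2_with_def
proof (intro conjI ballI)
  fix x assume "x \<in> {x. x \<noteq> 0 \<and> pr x \<in> U}"
  then have x: "x \<noteq> 0" and px: "pr x \<in> U" by auto
  have d1: "(\<Psi> has_derivative (\<lambda>h. D1 (pr x) \<bullet> h)) (at (pr x))"
   and d2: "(D1 has_derivative (\<lambda>h. D2 (pr x) *v h)) (at (pr x))" using C px unfolding C2_with_def by auto
  note P = pr_deriv[OF x]
  show "((\<lambda>x. \<Psi> (pr x)) has_derivative (\<lambda>h. inverse (norm x) *\<^sub>R (D1 (pr x) - (D1 (pr x) \<bullet> pr x) *\<^sub>R pr x) \<bullet> h)) (at x)"
    apply (rule has_derivative_eq_rhs[OF has_derivative_compose[OF P d1]])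
    by (simp add: fun_eq_iff algebra_simps inner_diff_left inner_diff_right inner_commute)
  have da: "((\<lambda>x. D1 (pr x)) has_derivative (\<lambda>h. D2 (pr x) *v (inverse (norm x) *\<^sub>R (h - (pr x \<bullet> h) *\<^sub>R pr x)))) (at x)"
    by (rule has_derivative_compose[OF P d2])
  have dip: "((\<lambda>x. D1 (pr x) \<bullet> pr x) has_derivative (\<lambda>h. D1 (pr x) \<bullet> (inverse (norm x) *\<^sub>R (h - (pr x \<bullet> h) *\<^sub>R pr x))
       + (D2 (pr x) *v (inverse (norm x) *\<^sub>R (h - (pr x \<bullet> h) *\<^sub>R pr x))) \<bullet> pr x)) (at x)"
    by (rule has_derivative_inner[OF da P])
  have dG: "((\<lambda>x. inverse (norm x) *\<^sub>R (D1 (pr x) - (D1 (pr x) \<bullet> pr x) *\<^sub>R pr x)) has_derivative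
     (\<lambda>h. inverse (norm x) *\<^sub>R (D2 (pr x) *v (inverse (norm x) *\<^sub>R (h - (pr x \<bullet> h) *\<^sub>R pr x)) - ((D1 (pr x) \<bullet> pr x) *\<^sub>R (inverse (norm x) *\<^sub>R (h - (pr x \<bullet> h) *\<^sub>R pr x))
        + (D1 (pr x) \<bullet> (inverse (norm x) *\<^sub>R (h - (pr x \<bullet> h) *\<^sub>R pr x)) + (D2 (pr x) *v (inverse (norm x) *\<^sub>R (h - (pr x \<bullet> h) *\<^sub>R pr x))) \<bullet> pr x) *\<^sub>R pr x))
       + (- (inverse (norm x) * (h \<bullet> pr x) * inverse (norm x))) *\<^sub>R (D1 (pr x) - (D1 (pr x) \<bullet> pr x) *\<^sub>R pr x))) (at x)"
    by (rule has_derivative_scaleR[OF inv_norm_deriv[OF x] has_derivative_diff[OF da has_derivative_scaleR[OF dip P]]])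
  show "((\<lambda>x. inverse (norm x) *\<^sub>R (D1 (pr x) - (D1 (pr x) \<bullet> pr x) *\<^sub>R pr x)) has_derivative
     (\<lambda>h. ((inverse (norm x) * inverse (norm x)) *\<^sub>R (proj_perp (pr x) ** D2 (pr x) ** proj_perp (pr x)
        - (D1 (pr x) \<bullet> pr x) *\<^sub>R proj_perp (pr x) - outer (pr x) (proj_perp (pr x) *v D1 (pr x))
        - outer (proj_perp (pr x) *v D1 (pr x)) (pr x))) *v h)) (at x)"
    apply (rule has_derivative_eq_rhs[OF dG])
    apply (simp only: fun_eq_iff scaleR_mulv)
    using key_identity by metis
next
  have cpr: "continuous_on {x. x \<noteq> 0 \<and> pr x \<in> U} pr"
    by (rule continuous_on_subset[OF continuous_on_pr]) auto
  have sub: "pr ` {x. x \<noteq> 0 \<and> pr x \<in> U} \<subseteq> U" by auto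
  have c2: "continuous_on {x. x \<noteq> 0 \<and> pr x \<in> U} (\<lambda>x. D2 (pr x))"
    using C unfolding C2_with_def by (intro continuous_on_compose2[OF _ cpr sub]) auto
  have c1: "continuous_on {x. x \<noteq> 0 \<and> pr x \<in> U} (\<lambda>x. D1 (pr x))"
    by (rule continuous_on_compose2[OF C2_cont(2)[OF C] cpr sub])
  have cn: "continuous_on {x. x \<noteq> 0 \<and> pr x \<in> U} (\<lambda>x::real^'n. inverse (norm x))"
    by (intro continuous_intros) auto
  show "continuous_on {x. x \<noteq> 0 \<and> pr x \<in> U} (\<lambda>x. (inverse (norm x) * inverse (norm x)) *\<^sub>R (proj_perp (pr x) ** D2 (pr x) ** proj_perp (pr x)
        - (D1 (pr x) \<bullet> pr x) *\<^sub>R proj_perp (pr x) - outer (pr x) (proj_perp (pr x) *v D1 (pr x))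
        - outer (proj_perp (pr x) *v D1 (pr x)) (pr x)))"
    unfolding proj_perp_def proj_line_def
    by (intro continuous_on_scaleR continuous_on_mult cn continuous_on_diff continuous_on_matmul continuous_on_const
        continuous_on_outer cpr c1 c2 continuous_on_mulv continuous_on_inner)
qed

lemma C2_subset: "C2_with W f D1 D2 \<Longrightarrow> V \<subseteq> W \<Longrightarrow> C2_with V f D1 D2"
  unfolding C2_with_def by (auto intro: continuous_on_subset)

lemma norm_pr: "x \<noteq> 0 \<Longrightarrow> norm (pr x) = 1"
  by (simp add: pr_def)

lemma pr_sphere: "norm x = 1 \<Longrightarrow> pr x = x"
  by (simp add: pr_def)

lemma vec_times_two: "(v::real^'n) * 2 = (2::real) *\<^sub>R v"
  by (simp add: vec_eq_iff)

lemma D2_at_sigma: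
  fixes \<sigma> a :: "real^'n" and B :: "real^'n^'n"
  assumes n: "norm \<sigma> = 1"
  shows "1 *\<^sub>R ((inverse 1 * inverse 1) *\<^sub>R (proj_perp \<sigma> ** B ** proj_perp \<sigma>
        - (a \<bullet> \<sigma>) *\<^sub>R proj_perp \<sigma> - outer \<sigma> (proj_perp \<sigma> *v a)
        - outer (proj_perp \<sigma> *v a) \<sigma>))
      + r *\<^sub>R ((k * 1 powr (k-2)) *\<^sub>R mat 1 + (k * (k-2) * 1 powr (k-2-2)) *\<^sub>R outer \<sigma> \<sigma>)
      + outer (inverse 1 *\<^sub>R (a - (a \<bullet> \<sigma>) *\<^sub>R \<sigma>)) ((k * 1 powr (k-2)) *\<^sub>R \<sigma>)
      + outer ((k * 1 powr (k-2)) *\<^sub>R \<sigma>) (inverse 1 *\<^sub>R (a - (a \<bullet> \<sigma>) *\<^sub>R \<sigma>))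
    = Phi_jet (2 - k) \<sigma> r (proj_perp \<sigma> *v a) (proj_perp \<sigma> ** B ** proj_perp \<sigma> - (a \<bullet> \<sigma>) *\<^sub>R proj_perp \<sigma>)"
  unfolding matrix_eq Phi_jet_def
  apply (simp only: proj_perp_def proj_line_def matrix_vector_mult_diff_rdistrib scaleR_mulv outer_mulv
      matrix_vector_mult_add_rdistrib matrix_vector_mul_lid
      matrix_vector_mul_assoc[symmetric] matrix_vector_mult_diff_distrib matrix_vector_mult_scaleR)
  by (simp add: proj_perp_def proj_line_def matrix_vector_mult_diff_rdistrib scaleR_mulv outer_mulv
      matrix_vector_mult_add_rdistrib
      matrix_vector_mul_assoc[symmetric] matrix_vector_mult_diff_distrib matrix_vector_mult_scaleR
      inner_diff_left inner_diff_right inner_add_left inner_add_right scaleR_diff_right scaleR_scaleR algebra_simps inner_commute vec_times_two)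

lemma Fsub_test: "F_subharmonic F u \<Longrightarrow> open U \<Longrightarrow> x \<in> U \<Longrightarrow> C2_with U \<phi> D1 D2 \<Longrightarrow>
   (\<forall>y\<in>U. u y \<le> ereal (\<phi> y)) \<Longrightarrow> u x = ereal (\<phi> x) \<Longrightarrow> D2 x \<in> F"
  unfolding F_subharmonic_def by blast

lemma partA:
  fixes F :: "(real^'n^'n) set" and g :: "real^'n \<Rightarrow> ereal"
  assumes u: "F_subharmonic F (\<lambda>x. if x = 0 then u0
                              else ereal (norm x powr (2 - p)) * g (inverse (norm x) *\<^sub>R x))"
    and gfin: "\<forall>\<sigma>\<in>sphere 0 1. g \<sigma> < \<infinity>"
  shows "F_sphere_subharmonic F p g"
proof -
  define u where "u = (\<lambda>x. if x = 0 then u0 else ereal (norm x powr (2 - p)) * g (inverse (norm x) *\<^sub>R x))"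
  have u': "F_subharmonic F u" using u unfolding u_def .
  have ug: "u \<sigma> = g \<sigma>" if "\<sigma> \<in> sphere 0 1" for \<sigma>
    using that by (auto simp: u_def)
  have usc: "usc_on (sphere 0 1) g"
    unfolding usc_on_def
  proof (intro ballI allI impI)
    fix \<sigma> :: "real^'n" and c assume s: "\<sigma> \<in> sphere 0 1" and c: "g \<sigma> < c"
    have "eventually (\<lambda>y. u y < c) (at \<sigma> within UNIV)"
      using u' c ug[OF s] unfolding F_subharmonic_def usc_on_def by auto
    then have e1: "eventually (\<lambda>y. u y < c) (at \<sigma> within sphere 0 1)"
      by (rule filter_leD[OF at_le, rotated]) simp
    have e2: "eventually (\<lambda>y. y \<in> sphere 0 1) (at \<sigma> within sphere 0 1)"
      by (simp add: eventually_at_filter)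
    show "eventually (\<lambda>y. g y < c) (at \<sigma> within sphere 0 1)"
      using e1 e2 by eventually_elim (use ug in auto)
  qed
  have test: "Phi_jet p \<sigma> (\<Psi> \<sigma>) (proj_perp \<sigma> *v D1 \<sigma>)
          (proj_perp \<sigma> ** D2 \<sigma> ** proj_perp \<sigma> - (D1 \<sigma> \<bullet> \<sigma>) *\<^sub>R proj_perp \<sigma>) \<in> F"
    if s: "\<sigma> \<in> sphere 0 1" and U: "open U" and sU: "\<sigma> \<in> U" and C: "C2_with U \<Psi> D1 D2"
      and le: "\<forall>y\<in>U \<inter> sphere 0 1. g y \<le> ereal (\<Psi> y)" and eq: "g \<sigma> = ereal (\<Psi> \<sigma>)"
    for \<sigma> U \<Psi> D1 D2
  proof -
    define V where "V = {x::real^'n. x \<noteq> 0 \<and> pr x \<in> U}"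
    have n1: "norm \<sigma> = 1" using s by simp
    have s0: "\<sigma> \<noteq> 0" using n1 by auto
    have oV: "open V"
    proof -
      have "open (pr -` U \<inter> (- {0}))"
        using continuous_on_open_vimage[of "- {0}" pr] continuous_on_pr U by auto
      moreover have "V = pr -` U \<inter> (- {0})" unfolding V_def by auto
      ultimately show ?thesis by simp
    qed
    have sV: "\<sigma> \<in> V" using s0 sU n1 by (simp add: V_def pr_sphere)
    have CR: "C2_with V (\<lambda>x::real^'n. norm x powr (2-p)) (\<lambda>x. ((2-p) * norm x powr ((2-p)-2)) *\<^sub>R x)
     (\<lambda>x. ((2-p) * norm x powr ((2-p)-2)) *\<^sub>R mat 1 + ((2-p) * ((2-p)-2) * norm x powr ((2-p)-2-2)) *\<^sub>R outer x x)"
      by (rule C2_subset[OF C2_radial]) (auto simp: V_def)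
    note CH = C2_homog0[OF C U, folded V_def]
    note CP = C2_prod[OF CR CH]
    have leV: "\<forall>y\<in>V. u y \<le> ereal (norm y powr (2-p) * \<Psi> (pr y))"
    proof
      fix y assume "y \<in> V"
      then have y0: "y \<noteq> 0" and py: "pr y \<in> U" by (auto simp: V_def)
      have "g (pr y) \<le> ereal (\<Psi> (pr y))" using le py norm_pr[OF y0] by auto
      then have "ereal (norm y powr (2-p)) * g (pr y) \<le> ereal (norm y powr (2-p)) * ereal (\<Psi> (pr y))"
        by (rule ereal_mult_left_mono) simp
      then show "u y \<le> ereal (norm y powr (2-p) * \<Psi> (pr y))"
        using y0 by (simp add: u_def pr_def)
    qed
    have eqs: "u \<sigma> = ereal (norm \<sigma> powr (2-p) * \<Psi> (pr \<sigma>))"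
      using ug[OF s] eq n1 by (simp add: pr_sphere)
    note inF = Fsub_test[OF u' oV sV CP leV eqs]
    have "norm \<sigma> powr (2 - p) = 1" using n1 by simp
    show ?thesis using inF D2_at_sigma[OF n1, of "D2 \<sigma>" "D1 \<sigma>" "\<Psi> \<sigma>" "2 - p"]
      by (simp add: n1 pr_sphere)
  qed
  show ?thesis unfolding F_sphere_subharmonic_def using gfin usc test by blast
qed

lemma small_pow_le:
  assumes k: "(k::real) > 0" and M: "M > 0"
  shows "\<exists>\<delta>>0. \<delta> \<le> 1 \<and> (\<forall>t. 0 < t \<and> t \<le> \<delta> \<longrightarrow> t powr k \<le> M)"
proof (intro exI conjI allI impI)
  define \<delta> where "\<delta> = min 1 (M powr (1/k))"
  show "\<delta> > 0" "\<delta> \<le> 1" using M by (auto simp: \<delta>_def)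
  fix t :: real assume t: "0 < t \<and> t \<le> \<delta>"
  then have "t powr k \<le> (M powr (1/k)) powr k"
    using k by (intro powr_mono2) (auto simp: \<delta>_def)
  also have "\<dots> = M" using k M by (simp add: powr_powr)
  finally show "t powr k \<le> M" .
qed

lemma small_pow_ge:
  assumes k: "(k::real) < 0" and M: "M > 0"
  shows "\<exists>\<delta>>0. \<delta> \<le> 1 \<and> (\<forall>t. 0 < t \<and> t \<le> \<delta> \<longrightarrow> M \<le> t powr k)"
proof (intro exI conjI allI impI)
  define \<delta> where "\<delta> = min 1 (M powr (1/k))"
  show "\<delta> > 0" "\<delta> \<le> 1" using M by (auto simp: \<delta>_def)
  fix t :: real assume t: "0 < t \<and> t \<le> \<delta>"
  have "M = (M powr (1/k)) powr k" using k M by (simp add: powr_powr)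
  also have "\<dots> \<le> t powr k"
    using k t M by (intro powr_mono2') (auto simp: \<delta>_def)
  finally show "M \<le> t powr k" .
qed

definition uf :: "ereal \<Rightarrow> real \<Rightarrow> (real^'n \<Rightarrow> ereal) \<Rightarrow> real^'n \<Rightarrow> ereal" where
  "uf u0 p g x = (if x = 0 then u0 else ereal (norm x powr (2 - p)) * g (inverse (norm x) *\<^sub>R x))"

lemma uf_ray: "norm \<sigma> = 1 \<Longrightarrow> t > 0 \<Longrightarrow> uf u0 p g (t *\<^sub>R \<sigma>) = ereal (t powr (2-p)) * g \<sigma>"
  by (auto simp: uf_def)

lemma uf_le:
  assumes S: "Sup (g ` sphere 0 1) = ereal s" and y: "y \<noteq> 0"
  shows "uf u0 p g y \<le> ereal (norm y powr (2-p) * s)"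
proof -
  have "inverse (norm y) *\<^sub>R y \<in> sphere 0 1" using y by simp
  then have "g (inverse (norm y) *\<^sub>R y) \<le> ereal s" unfolding S[symmetric] by (rule SUP_upper)
  then have "ereal (norm y powr (2-p)) * g (inverse (norm y) *\<^sub>R y) \<le> ereal (norm y powr (2-p)) * ereal s"
    by (rule ereal_mult_left_mono) simp
  then show ?thesis using y by (simp add: uf_def)
qed

lemma usc0:
  assumes "F_subharmonic F u" and "u 0 < ereal c"
  shows "\<exists>d>0. \<forall>y. y \<noteq> 0 \<and> norm y < d \<longrightarrow> u y < ereal c"
proof -
  have "eventually (\<lambda>y. u y < ereal c) (at 0 within UNIV)"
    using assms unfolding F_subharmonic_def usc_on_def by auto
  then show ?thesis unfolding eventually_at by (auto simp: dist_norm)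
qed

lemma sphere_nonempty: "sphere (0::real^'n) 1 \<noteq> {}"
proof -
  have "axis undefined (1::real) \<in> sphere (0::real^'n) 1" by simp
  then show ?thesis by blast
qed

lemma max_fun_eq:
  fixes g :: "real^'n \<Rightarrow> ereal"
  assumes S: "Sup (g ` sphere 0 1) = ereal s" and r: "r > 0"
    and u0: "u0 \<le> ereal (r powr (2-p) * s)"
    and mono: "\<forall>t. 0 < t \<and> t \<le> r \<longrightarrow> t powr (2-p) * s \<le> r powr (2-p) * s"
  shows "max_fun (uf u0 p g) r = ereal (r powr (2-p) * s)"
  unfolding max_fun_def
proof (rule antisym)
  show "Sup (uf u0 p g ` cball 0 r) \<le> ereal (r powr (2-p) * s)"
  proof (rule SUP_least)
    fix y :: "real^'n" assume y: "y \<in> cball 0 r"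
    show "uf u0 p g y \<le> ereal (r powr (2-p) * s)"
    proof (cases "y = 0")
      case True then show ?thesis using u0 by (simp add: uf_def)
    next
      case False
      have "uf u0 p g y \<le> ereal (norm y powr (2-p) * s)" by (rule uf_le[OF S False])
      also have "\<dots> \<le> ereal (r powr (2-p) * s)" using mono False y by auto
      finally show ?thesis .
    qed
  qed
next
  have "ereal (r powr (2-p) * s) = ereal (r powr (2-p)) * Sup (g ` sphere 0 1)" using S by simp
  also have "\<dots> = (SUP \<sigma>\<in>sphere 0 1. ereal (r powr (2-p)) * g \<sigma>)"
    by (rule Sup_ereal_mult_left'[OF sphere_nonempty]) simp
  also have "\<dots> \<le> Sup (uf u0 p g ` cball 0 r)"
  proof (rule SUP_least)
    fix \<sigma> :: "real^'n" assume s: "\<sigma> \<in> sphere 0 1"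
    have "ereal (r powr (2-p)) * g \<sigma> = uf u0 p g (r *\<^sub>R \<sigma>)" using uf_ray[of \<sigma> r] s r by simp
    also have "\<dots> \<le> Sup (uf u0 p g ` cball 0 r)" using s r by (intro SUP_upper) auto
    finally show "ereal (r powr (2-p)) * g \<sigma> \<le> Sup (uf u0 p g ` cball 0 r)" .
  qed
  finally show "ereal (r powr (2-p) * s) \<le> Sup (uf u0 p g ` cball 0 r)" .
qed

lemma theta_const:
  assumes p: "p \<noteq> 2" and M: "\<forall>r>0. max_fun u r = ereal (r powr (2-p) * s)"
    and rt: "0 < r" "r < t"
  shows "theta_quot p u (r,t) = ereal (if p < 2 then s else -s)"
proof (cases "p < 2")
  case True
  have "r powr (2-p) < t powr (2-p)" using True rt by (intro powr_less_mono2) auto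
  then show ?thesis using True rt M unfolding theta_quot_def riesz_kernel_def
    by (simp add: left_diff_distrib[symmetric])
next
  case False
  then have "p > 2" using p by simp
  then have "t powr (2-p) < r powr (2-p)" using rt by (intro powr_less_mono2_neg) auto
  then show ?thesis using False rt M unfolding theta_quot_def riesz_kernel_def
    by (simp add: left_diff_distrib[symmetric] field_simps)
qed

lemma theta_lim:
  assumes p: "p \<noteq> 2" and M: "\<forall>r>0. max_fun u r = ereal (r powr (2-p) * s)"
  shows "(theta_quot p u \<longlongrightarrow> ereal (if p < 2 then s else -s)) small_pairs"
proof (rule tendsto_eventually)
  show "eventually (\<lambda>x. theta_quot p u x = ereal (if p < 2 then s else -s)) small_pairs"
    unfolding small_pairs_def eventually_at_filter
    by (rule always_eventually) (auto simp: theta_const[OF p M])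
qed

lemma uf0: "uf u0 p g 0 = u0" by (simp add: uf_def)

lemma u0_fin: "F_subharmonic F (uf u0 p g) \<Longrightarrow> u0 < \<infinity>"
  unfolding F_subharmonic_def using uf0 by metis

lemma case_gt2:
  fixes F :: "(real^'n^'n) set" and g :: "real^'n \<Rightarrow> ereal"
  assumes F: "cone_subequation F" and p2: "p > 2" and u: "F_subharmonic F (uf u0 p g)"
    and gfin: "\<forall>\<sigma>\<in>sphere 0 1. g \<sigma> < \<infinity>" and s0: "\<sigma>0 \<in> sphere 0 1" and c0: "g \<sigma>0 = ereal c0"
  shows "\<exists>s. Sup (g ` sphere 0 1) = ereal s \<and> s \<le> 0 \<and> (\<forall>r>0. u0 \<le> ereal (r powr (2-p) * s))"
proof -
  have k: "2 - p < 0" using p2 by simp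
  have u0f: "u0 < \<infinity>" by (rule u0_fin[OF u])
  have S0: "Sup (g ` sphere 0 1) \<le> 0"
  proof (rule ccontr)
    assume "\<not> Sup (g ` sphere 0 1) \<le> 0"
    then have "0 < Sup (g ` sphere 0 1)" by simp
    then obtain \<sigma> where s: "\<sigma> \<in> sphere 0 1" and gs: "0 < g \<sigma>" by (auto simp: less_SUP_iff)
    obtain c where c: "g \<sigma> = ereal c" using gs gfin s by (cases "g \<sigma>") auto
    have cpos: "c > 0" using gs c by simp
    obtain n :: nat where n: "u0 < ereal (real n)" using u0f less_PInf_Ex_of_nat by blast
    obtain d where d: "d > 0" and dd: "\<forall>y. y \<noteq> 0 \<and> norm y < d \<longrightarrow> uf u0 p g y < ereal (real n)"
      using usc0[OF u, of "real n"] n by (auto simp: uf0)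
    obtain \<delta> where dp: "\<delta> > 0" and dl: "\<forall>t. 0 < t \<and> t \<le> \<delta> \<longrightarrow> (real n + 1) / c \<le> t powr (2-p)"
      using small_pow_ge[OF k, of "(real n + 1) / c"] cpos by auto
    define t where "t = min \<delta> (d/2)"
    have t: "t > 0" "t \<le> \<delta>" "t < d" using dp d by (auto simp: t_def)
    have ns: "norm \<sigma> = 1" using s by simp
    have sn0: "\<sigma> \<noteq> 0" using ns by auto
    have "uf u0 p g (t *\<^sub>R \<sigma>) < ereal (real n)" using dd[rule_format, of "t *\<^sub>R \<sigma>"] t ns sn0 by simp
    then have "t powr (2-p) * c < real n" using uf_ray[OF ns t(1)] c by simp
    moreover have "(real n + 1) / c \<le> t powr (2-p)" using dl t by auto
    then have "real n + 1 \<le> t powr (2-p) * c" using cpos by (simp add: field_simps)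
    ultimately show False by simp
  qed
  have "g \<sigma>0 \<le> Sup (g ` sphere 0 1)" using s0 by (rule SUP_upper)
  then obtain s where S: "Sup (g ` sphere 0 1) = ereal s" using S0 c0
    by (cases "Sup (g ` sphere 0 1)") auto
  have sle: "s \<le> 0" using S0 S by simp
  have "\<forall>r>0. u0 \<le> ereal (r powr (2-p) * s)"
  proof (cases "s = 0")
    case True
    have "u0 \<le> 0"
    proof (rule ccontr)
      assume "\<not> u0 \<le> 0"
      then obtain a where a: "u0 = ereal a" "a > 0" using u0f by (cases u0) auto
      show False
      proof (rule bad_test[OF F u])
        show "uf u0 p g 0 = ereal a" using a by (simp add: uf0)
        show "min 1 a > 0" using a by simp
        show "\<forall>y\<in>ball 0 (min 1 a). uf u0 p g y \<le> ereal (a - y \<bullet> y)"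
        proof
          fix y :: "real^'n" assume y: "y \<in> ball 0 (min 1 a)"
          show "uf u0 p g y \<le> ereal (a - y \<bullet> y)"
          proof (cases "y = 0")
            case True then show ?thesis using a by (simp add: uf0)
          next
            case False
            have "norm y * norm y \<le> norm y * 1" using y by (intro mult_left_mono) auto
            then have yy: "y \<bullet> y \<le> a" using y by (simp add: power2_norm_eq_inner[symmetric] power2_eq_square)
            have "uf u0 p g y \<le> ereal (norm y powr (2-p) * s)" by (rule uf_le[OF S False])
            moreover have "ereal (norm y powr (2-p) * s) \<le> ereal (a - y \<bullet> y)" using True yy by simp
            ultimately show ?thesis by (rule order_trans)
          qed
        qed
      qed
    qed
    then show ?thesis using True by (auto simp: zero_ereal_def)
  next
    case False
    then have sneg: "s < 0" using sle by simp
    have "u0 = -\<infinity>"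
    proof (rule ccontr)
      assume "u0 \<noteq> -\<infinity>"
      then obtain a where a: "u0 = ereal a" using u0f by (cases u0) auto
      obtain \<delta> where dp: "\<delta> > 0" and d1: "\<delta> \<le> 1" and dl: "\<forall>t. 0 < t \<and> t \<le> \<delta> \<longrightarrow> (\<bar>a\<bar> + 1) / (- s) \<le> t powr (2-p)"
      proof -
        have "(\<bar>a\<bar> + 1) / (- s) > 0" using sneg by (simp add: divide_pos_neg)
        from small_pow_ge[OF k this] show ?thesis using that by blast
      qed
      show False
      proof (rule bad_test[OF F u])
        show "uf u0 p g 0 = ereal a" using a by (simp add: uf0)
        show "\<delta> > 0" by (rule dp)
        show "\<forall>y\<in>ball 0 \<delta>. uf u0 p g y \<le> ereal (a - y \<bullet> y)"
        proof
          fix y :: "real^'n" assume y: "y \<in> ball 0 \<delta>"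
          show "uf u0 p g y \<le> ereal (a - y \<bullet> y)"
          proof (cases "y = 0")
            case True then show ?thesis using a by (simp add: uf0)
          next
            case False
            have ny: "norm y < 1" using y d1 by simp
            have "norm y * norm y \<le> 1 * 1" using ny by (intro mult_mono) auto
            then have yy: "y \<bullet> y \<le> 1" by (simp add: power2_norm_eq_inner[symmetric] power2_eq_square)
            have M: "(\<bar>a\<bar> + 1) / (- s) \<le> norm y powr (2-p)" using dl y False by auto
            have "norm y powr (2-p) * s \<le> ((\<bar>a\<bar> + 1) / (- s)) * s"
              using M sneg by (intro mult_right_mono_neg) auto
            also have "\<dots> = - (\<bar>a\<bar> + 1)" using sneg by (simp add: field_simps)
            finally have "norm y powr (2-p) * s \<le> a - y \<bullet> y" using yy by linarith
            moreover have "uf u0 p g y \<le> ereal (norm y powr (2-p) * s)" by (rule uf_le[OF S False])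
            ultimately show ?thesis by (meson ereal_less_eq(3) order_trans)
          qed
        qed
      qed
    qed
    then show ?thesis by simp
  qed
  then show ?thesis using S sle by blast
qed

lemma yy_pow: "(y::real^'n) \<noteq> 0 \<Longrightarrow> y \<bullet> y = norm y powr 2"
  by (simp add: power2_norm_eq_inner[symmetric] powr_numeral)

lemma case_lt2:
  fixes F :: "(real^'n^'n) set" and g :: "real^'n \<Rightarrow> ereal"
  assumes F: "cone_subequation F" and p1: "1 \<le> p" and p2: "p < 2" and u: "F_subharmonic F (uf u0 p g)"
    and gfin: "\<forall>\<sigma>\<in>sphere 0 1. g \<sigma> < \<infinity>" and s0: "\<sigma>0 \<in> sphere 0 1" and c0: "g \<sigma>0 = ereal c0"
  shows "\<exists>s. Sup (g ` sphere 0 1) = ereal s \<and> 0 \<le> s \<and> (\<forall>r>0. u0 \<le> ereal (r powr (2-p) * s))"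
proof -
  have k: "2 - p > 0" using p2 by simp
  have u0f: "u0 < \<infinity>" by (rule u0_fin[OF u])
  have ns0: "norm \<sigma>0 = 1" using s0 by simp
  have sn0: "\<sigma>0 \<noteq> 0" using ns0 by auto
  have u0nn: "0 \<le> u0"
  proof (rule ccontr)
    assume "\<not> 0 \<le> u0"
    then have neg: "u0 < 0" by simp
    obtain c' where c': "c' < 0" "u0 < ereal c'"
    proof (cases u0)
      case (real a) then show ?thesis using neg that[of "a/2"] by simp
    next
      case MInf then show ?thesis using that[of "-1"] by simp
    next
      case PInf then show ?thesis using neg by simp
    qed
    obtain d where d: "d > 0" and dd: "\<forall>y. y \<noteq> 0 \<and> norm y < d \<longrightarrow> uf u0 p g y < ereal c'"
      using usc0[OF u, of c'] c' by (auto simp: uf0)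
    have Mp: "(- c') / (\<bar>c0\<bar> + 1) > 0" using c' by (simp add: divide_neg_pos add_nonneg_pos)
    obtain \<delta> where dp: "\<delta> > 0" and dl: "\<forall>t. 0 < t \<and> t \<le> \<delta> \<longrightarrow> t powr (2-p) \<le> (- c') / (\<bar>c0\<bar> + 1)"
      using small_pow_le[OF k Mp] by blast
    define t where "t = min \<delta> (d/2)"
    have t: "t > 0" "t \<le> \<delta>" "t < d" using dp d by (auto simp: t_def)
    have "uf u0 p g (t *\<^sub>R \<sigma>0) < ereal c'" using dd[rule_format, of "t *\<^sub>R \<sigma>0"] t ns0 sn0 by simp
    then have lt: "t powr (2-p) * c0 < c'" using uf_ray[OF ns0 t(1)] c0 by simp
    have tk: "t powr (2-p) \<le> (- c') / (\<bar>c0\<bar> + 1)" using dl t by auto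
    have "t powr (2-p) * (- (\<bar>c0\<bar> + 1)) \<le> t powr (2-p) * c0"
      by (intro mult_left_mono) auto
    then have "- (t powr (2-p) * (\<bar>c0\<bar> + 1)) \<le> t powr (2-p) * c0" by (simp add: algebra_simps)
    moreover have "t powr (2-p) * (\<bar>c0\<bar> + 1) \<le> - c'"
      using tk by (simp add: field_simps)
    ultimately show False using lt by simp
  qed
  obtain a where a: "u0 = ereal a" "0 \<le> a" using u0nn u0f by (cases u0) auto
  obtain d where d: "d > 0" and dd: "\<forall>y. y \<noteq> 0 \<and> norm y < d \<longrightarrow> uf u0 p g y < ereal (a + 1)"
    using usc0[OF u, of "a + 1"] a by (auto simp: uf0)
  define t where "t = d / 2"
  have t: "t > 0" "t < d" using d by (auto simp: t_def)
  have tk: "t powr (2-p) > 0" using t by simp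
  have bnd: "g \<sigma> \<le> ereal ((a + 1) / t powr (2-p))" if s: "\<sigma> \<in> sphere 0 1" for \<sigma>
  proof -
    have ns: "norm \<sigma> = 1" using s by simp
    then have "\<sigma> \<noteq> 0" by auto
    then have "uf u0 p g (t *\<^sub>R \<sigma>) < ereal (a + 1)" using dd[rule_format, of "t *\<^sub>R \<sigma>"] t ns by simp
    then have lt: "ereal (t powr (2-p)) * g \<sigma> < ereal (a + 1)" using uf_ray[OF ns t(1)] by simp
    show ?thesis
    proof (cases "g \<sigma>")
      case (real x)
      then have "t powr (2-p) * x < a + 1" using lt by simp
      then have "x < (a + 1) / t powr (2-p)" using tk by (simp add: field_simps)
      then show ?thesis using real by simp
    next
      case PInf then show ?thesis using gfin s by auto
    qed simp
  qed
  have "g \<sigma>0 \<le> Sup (g ` sphere 0 1)" using s0 by (rule SUP_upper)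
  moreover have "Sup (g ` sphere 0 1) \<le> ereal ((a + 1) / t powr (2-p))"
    using bnd by (rule SUP_least)
  ultimately obtain s where S: "Sup (g ` sphere 0 1) = ereal s" using c0
    by (cases "Sup (g ` sphere 0 1)") auto
  have snn: "0 \<le> s"
  proof (rule ccontr)
    assume "\<not> 0 \<le> s"
    then have sneg: "s < 0" by simp
    show False
    proof (rule bad_test[OF F u])
      show "uf u0 p g 0 = ereal a" using a by (simp add: uf0)
      show "min 1 (- s) > 0" using sneg by simp
      show "\<forall>y\<in>ball 0 (min 1 (- s)). uf u0 p g y \<le> ereal (a - y \<bullet> y)"
      proof
        fix y :: "real^'n" assume y: "y \<in> ball 0 (min 1 (- s))"
        show "uf u0 p g y \<le> ereal (a - y \<bullet> y)"
        proof (cases "y = 0")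
          case True then show ?thesis using a by (simp add: uf0)
        next
          case False
          have ny: "norm y < 1" "norm y < - s" using y by auto
          have "y \<bullet> y = norm y powr (2-p) * norm y powr p"
            using False by (simp add: yy_pow powr_add[symmetric])
          also have "\<dots> \<le> norm y powr (2-p) * norm y powr 1"
            using p1 ny by (intro mult_left_mono powr_mono') auto
          also have "\<dots> \<le> norm y powr (2-p) * (- s)"
            using ny False by (intro mult_left_mono) auto
          finally have "norm y powr (2-p) * s \<le> a - y \<bullet> y" using a by (simp add: algebra_simps)
          moreover have "uf u0 p g y \<le> ereal (norm y powr (2-p) * s)" by (rule uf_le[OF S False])
          ultimately show ?thesis by (meson ereal_less_eq(3) order_trans)
        qed
      qed
    qed
  qed
  have "a \<le> 0"
  proof (rule ccontr)
    assume "\<not> a \<le> 0"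
    then have apos: "a > 0" by simp
    have Mp: "a / (s + 1) > 0" using apos snn by simp
    obtain \<delta> where dp: "\<delta> > 0" and d1: "\<delta> \<le> 1" and dl: "\<forall>t. 0 < t \<and> t \<le> \<delta> \<longrightarrow> t powr (2-p) \<le> a / (s + 1)"
      using small_pow_le[OF k Mp] by blast
    show False
    proof (rule bad_test[OF F u])
      show "uf u0 p g 0 = ereal a" using a by (simp add: uf0)
      show "\<delta> > 0" by (rule dp)
      show "\<forall>y\<in>ball 0 \<delta>. uf u0 p g y \<le> ereal (a - y \<bullet> y)"
      proof
        fix y :: "real^'n" assume y: "y \<in> ball 0 \<delta>"
        show "uf u0 p g y \<le> ereal (a - y \<bullet> y)"
        proof (cases "y = 0")
          case True then show ?thesis using a by (simp add: uf0)
        next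
          case False
          have ny: "norm y < 1" using y d1 by simp
          have "y \<bullet> y = norm y powr 2" using False by (simp add: yy_pow)
          also have "\<dots> \<le> norm y powr (2-p)"
            using p1 ny by (intro powr_mono') auto
          finally have yy: "y \<bullet> y \<le> norm y powr (2-p)" .
          have "norm y powr (2-p) \<le> a / (s + 1)" using dl y False by auto
          then have "norm y powr (2-p) * (s + 1) \<le> a" using snn by (simp add: field_simps)
          then have "norm y powr (2-p) * s \<le> a - y \<bullet> y" using yy by (simp add: algebra_simps)
          moreover have "uf u0 p g y \<le> ereal (norm y powr (2-p) * s)" by (rule uf_le[OF S False])
          ultimately show ?thesis by (meson ereal_less_eq(3) order_trans)
        qed
      qed
    qed
  qed
  then have "u0 = 0" using a by (simp add: zero_ereal_def)
  then have "\<forall>r>0. u0 \<le> ereal (r powr (2-p) * s)" using snn by (simp add: zero_ereal_def)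
  then show ?thesis using S snn by blast
qed

theorem proposition5p6:
  fixes F :: "(real^'n^'n) set" and G :: "(real^'n^'n) set"
    and p :: real and g :: "real^'n \<Rightarrow> ereal" and u0 :: ereal
  assumes "cone_subequation F"
    and "transitive_orth_subgroup G" and "invariant_under G F"
    and "1 \<le> p" and "p \<noteq> 2"
    and "\<forall>e::real^'n. norm e = 1 \<longrightarrow> riesz_char F e = ereal p"
    and "\<forall>\<sigma>\<in>sphere 0 1. g \<sigma> < \<infinity>"
    and "F_subharmonic F (\<lambda>x. if x = 0 then u0
                              else ereal (norm x powr (2 - p)) * g (inverse (norm x) *\<^sub>R x))"
  shows "F_sphere_subharmonic F p g \<and>
         ((\<exists>\<sigma>\<in>sphere 0 1. g \<sigma> \<noteq> -\<infinity>) \<longrightarrow>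
           (\<exists>\<Theta>. (theta_quot p (\<lambda>x. if x = 0 then u0
                              else ereal (norm x powr (2 - p)) * g (inverse (norm x) *\<^sub>R x))
                     \<longlongrightarrow> \<Theta>) small_pairs \<and>
               (2 < p \<longrightarrow> Sup (g ` sphere 0 1) = - \<Theta> \<and> - \<Theta> \<le> 0) \<and>
               (p < 2 \<longrightarrow> Sup (g ` sphere 0 1) = \<Theta> \<and> \<Theta> \<ge> 0)))"
proof -
  have uu: "(\<lambda>x. if x = 0 then u0 else ereal (norm x powr (2 - p)) * g (inverse (norm x) *\<^sub>R x)) = uf u0 p g"
    by (simp add: fun_eq_iff uf_def)
  have F: "cone_subequation F" and p1: "1 \<le> p" and p2: "p \<noteq> 2" and gfin: "\<forall>\<sigma>\<in>sphere 0 1. g \<sigma> < \<infinity>"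
    using assms by auto
  have u: "F_subharmonic F (uf u0 p g)" using assms(8) unfolding uu .
  have A: "F_sphere_subharmonic F p g" by (rule partA[OF assms(8) assms(7)])
  have B: "\<exists>\<Theta>. (theta_quot p (uf u0 p g) \<longlongrightarrow> \<Theta>) small_pairs \<and>
               (2 < p \<longrightarrow> Sup (g ` sphere 0 1) = - \<Theta> \<and> - \<Theta> \<le> 0) \<and>
               (p < 2 \<longrightarrow> Sup (g ` sphere 0 1) = \<Theta> \<and> \<Theta> \<ge> 0)"
    if ex: "\<exists>\<sigma>\<in>sphere 0 1. g \<sigma> \<noteq> -\<infinity>"
  proof -
    obtain \<sigma>0 where s0: "\<sigma>0 \<in> sphere 0 1" and ne: "g \<sigma>0 \<noteq> -\<infinity>" using ex by blast
    obtain c0 where c0: "g \<sigma>0 = ereal c0" using ne gfin s0 by (cases "g \<sigma>0") auto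
    show ?thesis
    proof (cases "p < 2")
      case True
      obtain s where S: "Sup (g ` sphere 0 1) = ereal s" and snn: "0 \<le> s"
        and u0b: "\<forall>r>0. u0 \<le> ereal (r powr (2-p) * s)"
        using case_lt2[OF F p1 True u gfin s0 c0] by blast
      have M: "\<forall>r>0. max_fun (uf u0 p g) r = ereal (r powr (2-p) * s)"
      proof (intro allI impI)
        fix r :: real assume r: "r > 0"
        have mono: "\<forall>t. 0 < t \<and> t \<le> r \<longrightarrow> t powr (2-p) * s \<le> r powr (2-p) * s"
          using True snn by (auto intro!: mult_right_mono powr_mono2)
        show "max_fun (uf u0 p g) r = ereal (r powr (2-p) * s)"
          by (rule max_fun_eq[OF S r]) (use u0b r mono in auto)
      qed
      have "(theta_quot p (uf u0 p g) \<longlongrightarrow> ereal s) small_pairs"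
        using theta_lim[OF p2 M] True by simp
      then show ?thesis using True S snn by auto
    next
      case False
      then have pg: "p > 2" using p2 by simp
      obtain s where S: "Sup (g ` sphere 0 1) = ereal s" and snp: "s \<le> 0"
        and u0b: "\<forall>r>0. u0 \<le> ereal (r powr (2-p) * s)"
        using case_gt2[OF F pg u gfin s0 c0] by blast
      have M: "\<forall>r>0. max_fun (uf u0 p g) r = ereal (r powr (2-p) * s)"
      proof (intro allI impI)
        fix r :: real assume r: "r > 0"
        have mono: "\<forall>t. 0 < t \<and> t \<le> r \<longrightarrow> t powr (2-p) * s \<le> r powr (2-p) * s"
          using pg snp by (auto intro!: mult_right_mono_neg powr_mono2')
        show "max_fun (uf u0 p g) r = ereal (r powr (2-p) * s)"
          by (rule max_fun_eq[OF S r]) (use u0b r mono in auto)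
      qed
      have "(theta_quot p (uf u0 p g) \<longlongrightarrow> ereal (- s)) small_pairs"
        using theta_lim[OF p2 M] False by simp
      then show ?thesis using False pg S snp by auto
    qed
  qed
  show ?thesis unfolding uu using A B by blast
qed

end
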